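(* Let $\mathbb{F}\in\{\mathbb{R},\mathbb{C}\}$, let $A$ be an $n\times m$ matrix over $\mathbb{F}$, let $p,q\in(1,\infty]$, and let $\sigma$ be the largest $\ell_1$ norm of the columns of $A$ (so $\sigma=\|A\|_{1,1}$). If $A\in\mathcal{E}_{1,1}(p,q)$, then (i) the entries of any column whose $\ell_1$ norm equals $\sigma$ all have the same absolute value $n^{-1}\sigma$; (ii) every column with this property is orthogonal to all the other columns of $A$; (iii) $\sigma=n^{1-(1/q)}\|A\|_{p,q}$. Conversely, if $A$ has a column all of whose entries have absolute value $n^{-1/q}\|A\|_{p,q}$, then $A\in\mathcal{E}_{1,1}(p,q)$. If $p>2$ and $A\neq0$, then $A\in\mathcal{E}_{1,1}(p,q)$ if and only if $A$ has only one nonzero column and all entries of this column have the same absolute value.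
   Context: $\|x\|_p$ is the Hölder $\ell_p$ norm; $\|A\|_{p,q}=\max_{x\in\mathbb{F}^m,x\ne0}\|Ax\|_q/\|x\|_p$ (for real $A$ one may use $\mathbb{F}=\mathbb{R}$ or $\mathbb{C}$); $1/\infty=0$. Orthogonality is with respect to $\langle a,b\rangle=\sum_i a_i\overline{b_i}$. For $p,q\in(1,\infty]$, $\mathcal{E}_{1,1}(p,q)$ is the set of $n\times m$ matrices $A$ with $\|A\|_{r,s}=n^{(1/s)-(1/q)}\|A\|_{p,q}$ for all $r\in[1,p)$ and $s\in[1,q)$. *)

theory Defs
  imports "HOL-Analysis.Analysis"
begin

definition lpnorm :: "ereal \<Rightarrow> complex^'n \<Rightarrow> real" where
  "lpnorm p x = (if p = \<infinity> then Max (range (\<lambda>i. norm (x$i)))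
     else (\<Sum>i\<in>UNIV. norm (x$i) powr real_of_ereal p) powr (1 / real_of_ereal p))"

definition inv_exp :: "ereal \<Rightarrow> real" where
  "inv_exp p = (if p = \<infinity> then 0 else 1 / real_of_ereal p)"

text \<open>Operator norm ||A||_{p,q} where the test vectors range over F^m
  (F is the scalar field, given as a subset of the complex numbers: either the reals or all of C).\<close>
definition opnorm :: "complex set \<Rightarrow> ereal \<Rightarrow> ereal \<Rightarrow> complex^'m^'n \<Rightarrow> real" where
  "opnorm F p q A = (SUP x\<in>{x :: complex^'m. x \<noteq> 0 \<and> (\<forall>i. x$i \<in> F)}.
       lpnorm q (A *v x) / lpnorm p x)"

definition E11 :: "complex set \<Rightarrow> ereal \<Rightarrow> ereal \<Rightarrow> complex^'m^'n \<Rightarrow> bool" where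
  "E11 F p q A = (\<forall>r s :: real. 1 \<le> r \<and> ereal r < p \<and> 1 \<le> s \<and> ereal s < q \<longrightarrow>
       opnorm F (ereal r) (ereal s) A
         = real CARD('n) powr (1 / s - inv_exp q) * opnorm F p q A)"

definition colnorm1 :: "complex^'m^'n \<Rightarrow> 'm \<Rightarrow> real" where
  "colnorm1 A j = (\<Sum>i\<in>UNIV. norm (A$i$j))"

definition maxcol1 :: "complex^'m^'n \<Rightarrow> real" where
  "maxcol1 A = Max (range (colnorm1 A))"

end

theory Submission
  imports Defs
begin

lemma d1: "0 < (x::real) \<Longrightarrow> ((\<lambda>x. x powr e) has_real_derivative e * x powr (e-1)) (at x)"
      by (intro derivative_eq_intros | simp)+
lemma d2: "0 < (x::real) \<Longrightarrow> ((\<lambda>x. e * x powr (e-1)) has_real_derivative e * ((e-1) * x powr (e-1-1))) (at x)"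
      by (intro derivative_eq_intros | simp)+
lemma d3: "0 < (x::real) \<Longrightarrow>((\<lambda>x. x powr s - k * x^2) has_real_derivative s * x powr (s-1) - 2*k*x) (at x)"
        by (intro derivative_eq_intros | simp)+
lemma d4: "0 < (x::real) \<Longrightarrow>((\<lambda>x. s * x powr (s-1) - 2*k*x) has_real_derivative s * ((s-1) * x powr (s-1-1)) - 2*k) (at x)"
        by (intro derivative_eq_intros | simp)+

lemma tangent_powr:
  fixes e m y :: real
  assumes e: "e \<ge> 1" and m: "m > 0" and y: "y \<ge> 0"
  shows "m powr e + e * m powr (e-1) * (y - m) \<le> y powr e"
proof (cases "y = 0")
  case True
  have "m powr e = m powr (e-1) * m" using m by (simp add: powr_diff)
  hence "m powr e + e * m powr (e-1) * (0 - m) = (1 - e) * m powr e" by (simp add: algebra_simps)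
  also have "\<dots> \<le> 0" using e by (simp add: mult_nonpos_nonneg)
  finally show ?thesis using True by simp
next
  case False
  hence yp: "y > 0" using y by simp
  have "e * m powr (e-1) * (y - m) \<le> y powr e - m powr e"
  proof (rule f''_imp_f'[where C="{0<..}" and f="\<lambda>x. x powr e" and f'' = "\<lambda>x. e * ((e-1) * x powr (e-1-1))"])
    show "convex {0::real<..}" by simp
    show "((\<lambda>x. x powr e) has_real_derivative e * x powr (e-1)) (at x)" if "x \<in> {0<..}" for x
      using that d1 by simp
    show "((\<lambda>x. e * x powr (e-1)) has_real_derivative e * ((e-1) * x powr (e-1-1))) (at x)" if "x \<in> {0<..}" for x
      using that d2 by simp
    show "0 \<le> e * ((e-1) * x powr (e-1-1))" if "x \<in> {0<..}" for x using e by simp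
    show "m \<in> {0<..}" using m by simp
    show "y \<in> {0<..}" using yp by simp
  qed
  thus ?thesis by simp
qed

lemma strong_conv:
  fixes s K V v :: real
  assumes s1: "1 < s" and s2: "s \<le> 2" and K: "0 < K" "K \<le> V" and v: "0 \<le> v" "v \<le> V"
  shows "K powr s + s * K powr (s-1) * (v-K) + (s-1) * V powr (s-2) / 2 * (v-K)^2 \<le> v powr s"
proof -
  define k where "k = (s-1) * V powr (s-2) / 2"
  have Vp: "V > 0" using K by simp
  have pw: "V powr (s-2) \<le> K powr (s-2)" using s2 K by (intro powr_mono2') auto
  have kK: "k \<le> (s-1) * K powr (s-2) / 2"
    unfolding k_def using s1 pw by (intro divide_right_mono mult_left_mono) auto
  have B: "K powr (s-1) * K = K powr s"
  proof -
    have "K powr (s-1) * K powr 1 = K powr (s - 1 + 1)" by (rule powr_add[symmetric])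
    then show ?thesis using K by simp
  qed
  show ?thesis
  proof (cases "v = 0")
    case True
    have C: "K powr (s-2) * K^2 = K powr s"
    proof -
      have "K powr (s-2) * K powr 2 = K powr (s - 2 + 2)" by (rule powr_add[symmetric])
      then show ?thesis using K by (simp add: powr_realpow)
    qed
    have "k * K^2 \<le> (s-1) * K powr (s-2) / 2 * K^2" using kK by (intro mult_right_mono) auto
    also have "\<dots> = (s-1) * (K powr (s-2) * K^2) / 2" by simp
    also have "\<dots> = (s-1) * K powr s / 2" using C by simp
    finally have A: "k * K^2 \<le> (s-1) * K powr s / 2" .
    have E: "K powr s + s * K powr (s-1) * (0-K) + k * (0-K)^2 = (1 - s) * K powr s + k * K^2"
      using B by (simp add: algebra_simps power2_eq_square)
    have F: "0 \<le> (s-1) * K powr s" using s1 by simp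
    have "(1 - s) * K powr s + k * K^2 \<le> 0" using A F by (simp add: algebra_simps)
    thus ?thesis using True E k_def by simp
  next
    case False
    hence vp: "v > 0" using v by simp
    have key: "(s * K powr (s-1) - 2*k*K) * (v - K) \<le> (v powr s - k * v^2) - (K powr s - k * K^2)"
    proof (rule f''_imp_f'[where C="{0<..V}" and f="\<lambda>x. x powr s - k * x^2"
          and f'' = "\<lambda>x. s * ((s-1) * x powr (s-1-1)) - 2*k"])
      show "convex {0::real<..V}" by (simp add: convex_real_interval)
      show "((\<lambda>x. x powr s - k * x^2) has_real_derivative s * x powr (s-1) - 2*k*x) (at x)" if "x \<in> {0<..V}" for x
        using that d3 by simp
      show "((\<lambda>x. s * x powr (s-1) - 2*k*x) has_real_derivative s * ((s-1) * x powr (s-1-1)) - 2*k) (at x)" if "x \<in> {0<..V}" for x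
        using that d4 by simp
      show "0 \<le> s * ((s-1) * x powr (s-1-1)) - 2*k" if "x \<in> {0<..V}" for x
      proof -
        have "V powr (s-2) \<le> x powr (s-2)" using that s2 by (intro powr_mono2') auto
        hence "(s-1) * V powr (s-2) \<le> (s-1) * x powr (s-2)" using s1 by (intro mult_left_mono) auto
        also have "\<dots> \<le> s * ((s-1) * x powr (s-2))"
        proof -
          have n: "0 \<le> (s-1) * x powr (s-2)" using s1 by simp
          show ?thesis using mult_right_mono[OF _ n, of 1 s] s1 by simp
        qed
        finally show ?thesis unfolding k_def by (simp add: diff_diff_eq)
      qed
      show "K \<in> {0<..V}" using K by simp
      show "v \<in> {0<..V}" using vp v by simp
    qed
    have "K powr s + s * K powr (s-1) * (v-K) + k * (v-K)^2 - v powr s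
        = (s * K powr (s-1) - 2*k*K) * (v - K) - ((v powr s - k * v^2) - (K powr s - k * K^2))"
      using B by (simp add: algebra_simps power2_eq_square)
    thus ?thesis using key unfolding k_def by linarith
  qed
qed

lemma lp_fin: "lpnorm (ereal p) x = (\<Sum>i\<in>UNIV. norm (x$i) powr p) powr (1/p)"
  by (simp add: lpnorm_def)

lemma lp_inf: "lpnorm \<infinity> x = Max (range (\<lambda>i. norm (x$i)))"
  by (simp add: lpnorm_def)

lemma ereal_ge1_cases:
  assumes "(p::ereal) \<ge> 1"
  obtains "p = \<infinity>" | r where "p = ereal r" "r \<ge> 1"
  using assms by (cases p) auto

lemma lp_ge_comp:
  assumes "p \<ge> 1" shows "norm (x$i) \<le> lpnorm p x"
  using assms
proof (cases rule: ereal_ge1_cases)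
  case 1 thus ?thesis by (simp add: lp_inf)
next
  case (2 r)
  have "norm (x$i) = (norm (x$i) powr r) powr (1/r)" using 2 by (simp add: powr_powr)
  also have "\<dots> \<le> (\<Sum>l\<in>UNIV. norm (x$l) powr r) powr (1/r)"
    using 2 by (intro powr_mono2 member_le_sum) auto
  finally show ?thesis using 2 by (simp add: lp_fin)
qed

lemma lp_nonneg: "p \<ge> 1 \<Longrightarrow> 0 \<le> lpnorm p x"
  using lp_ge_comp[of p x undefined] norm_ge_zero[of "x$undefined"] by linarith

lemma lp_pos: assumes "p \<ge> 1" "x \<noteq> 0" shows "0 < lpnorm p x"
proof -
  obtain i where "x$i \<noteq> 0" using assms(2) by (metis vec_eq_iff zero_index)
  thus ?thesis using lp_ge_comp[OF assms(1), of x i] by (meson less_le_trans zero_less_norm_iff)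
qed

lemma lp_zero: "p \<ge> 1 \<Longrightarrow> lpnorm p 0 = 0"
  by (cases rule: ereal_ge1_cases) (auto simp: lp_inf lp_fin)

lemma lp_pow: assumes "r \<ge> 1" shows "lpnorm (ereal r) x powr r = (\<Sum>i\<in>UNIV. norm (x$i) powr r)"
  using assms by (simp add: lp_fin powr_powr sum_nonneg)

lemma lp_mono:
  fixes x :: "complex^'n"
  assumes r: "1 \<le> r" "ereal r \<le> p"
  shows "lpnorm p x \<le> lpnorm (ereal r) x"
proof -
  have p1: "p \<ge> 1" using order_trans[of 1 "ereal r" p] r by simp
  show ?thesis using p1
  proof (cases rule: ereal_ge1_cases)
    case 1
    have "Max (range (\<lambda>i. norm (x$i))) \<in> range (\<lambda>i. norm (x$i))" by (intro Max_in) auto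
    then obtain i where i: "Max (range (\<lambda>i. norm (x$i))) = norm (x$i)" by blast
    hence "lpnorm p x = norm (x$i)" using 1 by (simp add: lp_inf)
    thus ?thesis using lp_ge_comp[of "ereal r" x i] r by simp
  next
    case (2 p')
    have rp: "r \<le> p'" using r 2 by simp
    show ?thesis
    proof (cases "x = 0")
      case True
      have "lpnorm p x = 0" using True lp_zero[OF p1] by simp
      moreover have "lpnorm (ereal r) x = 0" using True lp_zero[of "ereal r"] r by simp
      ultimately show ?thesis by simp
    next
      case False
      define M where "M = lpnorm (ereal r) x"
      have Mp: "M > 0" unfolding M_def using lp_pos[of "ereal r" x] False r by simp
      have y1: "norm (x$i) / M \<le> 1" for i using lp_ge_comp[of "ereal r" x i] r Mp unfolding M_def by simp
      have "(\<Sum>i\<in>UNIV. (norm (x$i) / M) powr p') \<le> (\<Sum>i\<in>UNIV. (norm (x$i) / M) powr r)"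
        using y1 Mp rp by (intro sum_mono powr_mono') auto
      also have "\<dots> = (\<Sum>i\<in>UNIV. norm (x$i) powr r) / M powr r"
        by (simp add: powr_divide sum_divide_distrib)
      also have "\<dots> = 1"
      proof -
        have "M powr r > 0" using Mp by simp
        thus ?thesis using lp_pow[of r x] r unfolding M_def by simp
      qed
      finally have A: "(\<Sum>i\<in>UNIV. norm (x$i) powr p') / M powr p' \<le> 1"
        by (simp add: powr_divide sum_divide_distrib)
      have "(\<Sum>i\<in>UNIV. norm (x$i) powr p') \<le> M powr p'" using Mp A by (simp add: pos_divide_le_eq)
      hence "(\<Sum>i\<in>UNIV. norm (x$i) powr p') powr (1/p') \<le> (M powr p') powr (1/p')"
        using 2 by (intro powr_mono2) (auto simp: sum_nonneg)
      also have "\<dots> = M" using 2 Mp by (simp add: powr_powr)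
      finally show ?thesis using 2 by (simp add: lp_fin M_def)
    qed
  qed
qed
lemma lp_const:
  fixes x :: "complex^'n"
  assumes p: "p \<ge> 1" and c: "\<And>i. norm (x$i) = c" "c \<ge> 0"
  shows "lpnorm p x = real CARD('n) powr (inv_exp p) * c"
  using p
proof (cases rule: ereal_ge1_cases)
  case 1
  have "range (\<lambda>i. norm (x$i)) = {c}" using c by auto
  thus ?thesis using 1 by (simp add: lp_inf inv_exp_def)
next
  case (2 r)
  have "lpnorm p x = (real CARD('n) * c powr r) powr (1/r)" using 2 c by (simp add: lp_fin)
  also have "\<dots> = real CARD('n) powr (1/r) * c" using 2 c by (simp add: powr_mult powr_powr)
  finally show ?thesis using 2 by (simp add: inv_exp_def)
qed

lemma lp_one: "lpnorm (ereal 1) y = (\<Sum>i\<in>UNIV. norm (y$i))"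
  by (simp add: lp_fin sum_nonneg)

lemma lp_unit:
  assumes p: "p \<ge> 1"
  shows "lpnorm p (\<chi> l. if l = j then 1 else 0) = 1"
  using p
proof (cases rule: ereal_ge1_cases)
  case 1
  have "Max (range (\<lambda>i. norm ((\<chi> l. if l = j then 1 else (0::complex))$i))) = 1"
    by (rule Max_eqI) auto
  thus ?thesis using 1 by (simp add: lp_inf)
next
  case (2 r)
  have "(\<Sum>i\<in>UNIV. norm ((\<chi> l. if l = j then 1 else (0::complex))$i) powr r)
     = (\<Sum>i\<in>UNIV. if i = j then 1 else 0)"
    using 2 by (intro sum.cong) auto
  thus ?thesis using 2 by (simp add: lp_fin)
qed

lemma lp_two:
  assumes r: "r \<ge> 1" and jk: "j \<noteq> k"
  shows "lpnorm (ereal r) (\<chi> l. if l = j then 1 else if l = k then \<tau> else 0) = (1 + norm \<tau> powr r) powr (1/r)"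
proof -
  have "(\<Sum>i\<in>UNIV. norm ((\<chi> l. if l = j then 1 else if l = k then \<tau> else (0::complex))$i) powr r)
     = (\<Sum>i\<in>UNIV. (if i = j then 1 else 0) + (if i = k then norm \<tau> powr r else 0))"
    using r jk by (intro sum.cong) auto
  also have "\<dots> = 1 + norm \<tau> powr r" by (simp add: sum.distrib)
  finally show ?thesis by (simp add: lp_fin)
qed

lemma lp_pm:
  fixes y :: "complex^'n"
  assumes s: "1 \<le> s" "ereal s \<le> q"
  shows "lpnorm (ereal s) y \<le> real CARD('n) powr (1/s - inv_exp q) * lpnorm q y"
proof -
  have q1: "q \<ge> 1" using order_trans[of 1 "ereal s" q] s by simp
  define n where "n = real CARD('n)"
  have np: "n > 0" unfolding n_def by simp
  show ?thesis using q1
  proof (cases rule: ereal_ge1_cases)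
    case 1
    define M where "M = lpnorm q y"
    have M0: "M \<ge> 0" unfolding M_def by (rule lp_nonneg[OF q1])
    have "(\<Sum>i\<in>UNIV. norm (y$i) powr s) \<le> of_nat (card (UNIV::'n set)) * M powr s"
      using lp_ge_comp[OF q1, of y] s unfolding M_def by (intro sum_bounded_above powr_mono2) auto
    hence "(\<Sum>i\<in>UNIV. norm (y$i) powr s) powr (1/s) \<le> (n * M powr s) powr (1/s)"
      using s unfolding n_def by (intro powr_mono2) (auto simp: sum_nonneg)
    also have "\<dots> = n powr (1/s) * M" using s M0 np by (simp add: powr_mult powr_powr)
    finally show ?thesis using 1 s by (simp add: lp_fin inv_exp_def n_def M_def)
  next
    case (2 q')
    have sq: "s \<le> q'" using s 2 by simp
    define S where "S = (\<Sum>i\<in>UNIV. norm (y$i) powr s)"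
    define T where "T = (\<Sum>i\<in>UNIV. norm (y$i) powr q')"
    have S0: "S \<ge> 0" unfolding S_def by (simp add: sum_nonneg)
    have T0: "T \<ge> 0" unfolding T_def by (simp add: sum_nonneg)
    have R0: "0 \<le> real CARD('n) powr (1/s - inv_exp q) * lpnorm q y"
      using lp_nonneg[OF q1, of y] by simp
    show ?thesis
    proof (cases "S = 0")
      case True
      thus ?thesis using R0 s by (simp add: lp_fin S_def)
    next
      case False
      hence Sp: "S > 0" using S0 by simp
      define m where "m = S / n"
      define e where "e = q' / s"
      have mp: "m > 0" unfolding m_def using Sp np by simp
      have e1: "e \<ge> 1" unfolding e_def using sq s by simp
      have ae: "(norm (y$i) powr s) powr e = norm (y$i) powr q'" for i
        using s unfolding e_def by (simp add: powr_powr)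
      have "(\<Sum>i\<in>UNIV. m powr e + e * m powr (e-1) * (norm (y$i) powr s - m)) \<le> (\<Sum>i\<in>UNIV. (norm (y$i) powr s) powr e)"
        using e1 mp by (intro sum_mono tangent_powr) auto
      also have "\<dots> = T" unfolding T_def using ae by simp
      also have "(\<Sum>i\<in>UNIV. m powr e + e * m powr (e-1) * (norm (y$i) powr s - m)) = n * m powr e + e * m powr (e-1) * (S - n * m)"
        unfolding S_def n_def by (simp add: sum.distrib sum_subtractf sum_distrib_left[symmetric])
      also have "S - n * m = 0" unfolding m_def using np by simp
      finally have "n * m powr e \<le> T" by simp
      hence me: "m powr e \<le> T / n" using np by (simp add: pos_le_divide_eq mult.commute)
      have "m = (m powr e) powr (1/e)" using e1 mp by (simp add: powr_powr)
      also have "\<dots> \<le> (T / n) powr (1/e)" using me e1 mp by (intro powr_mono2) auto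
      finally have mle: "m \<le> (T / n) powr (1/e)" .
      have "S powr (1/s) = (n * m) powr (1/s)" unfolding m_def using np by simp
      also have "\<dots> = n powr (1/s) * m powr (1/s)" by (simp add: powr_mult)
      also have "\<dots> \<le> n powr (1/s) * ((T / n) powr (1/e)) powr (1/s)"
        using mle mp s by (intro mult_left_mono powr_mono2) auto
      also have "((T / n) powr (1/e)) powr (1/s) = (T / n) powr (1/q')"
        using s sq unfolding e_def by (simp add: powr_powr)
      also have "(T / n) powr (1/q') = T powr (1/q') / n powr (1/q')" by (simp add: powr_divide)
      also have "n powr (1/s) * (T powr (1/q') / n powr (1/q')) = n powr (1/s - 1/q') * T powr (1/q')"
        using np by (simp add: powr_diff)
      finally show ?thesis using 2 s sq by (simp add: lp_fin inv_exp_def n_def S_def T_def)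
    qed
  qed
qed

definition SF :: "complex set \<Rightarrow> (complex^'m) set" where
  "SF F = {x. x \<noteq> 0 \<and> (\<forall>i. x$i \<in> F)}"

definition ev :: "'m::finite \<Rightarrow> complex^'m" where
  "ev j = (\<chi> l. if l = j then 1 else 0)"

lemma opnorm_SF: "opnorm F p q A = (SUP x\<in>SF F. lpnorm q (A *v x) / lpnorm p x)"
  by (simp add: opnorm_def SF_def)

lemma col_le_max: "colnorm1 A j \<le> maxcol1 A"
  unfolding maxcol1_def by (rule Max_ge) auto

lemma maxcol_attained: "\<exists>j. colnorm1 A j = maxcol1 A"
proof -
  have "maxcol1 A \<in> range (colnorm1 A)" unfolding maxcol1_def by (rule Max_in) auto
  thus ?thesis by auto
qed

lemma colnorm_nonneg: "0 \<le> colnorm1 A j"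
  unfolding colnorm1_def by (simp add: sum_nonneg)

lemma mv_bound: fixes A :: "complex^'m^'n" shows "lpnorm (ereal 1) (A *v x) \<le> (\<Sum>j\<in>UNIV. norm (x$j) * colnorm1 A j)"
proof -
  have "lpnorm (ereal 1) (A *v x) = (\<Sum>i\<in>UNIV. norm (\<Sum>j\<in>UNIV. A$i$j * x$j))"
    by (simp add: lp_one matrix_vector_mult_def)
  also have "\<dots> \<le> (\<Sum>i\<in>UNIV. \<Sum>j\<in>UNIV. norm (A$i$j) * norm (x$j))"
    by (intro sum_mono order_trans[OF norm_sum]) (simp add: norm_mult)
  also have "\<dots> = (\<Sum>j\<in>UNIV. \<Sum>i\<in>UNIV. norm (A$i$j) * norm (x$j))" by (rule sum.swap)
  also have "\<dots> = (\<Sum>j\<in>UNIV. norm (x$j) * colnorm1 A j)"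
    by (simp add: colnorm1_def sum_distrib_left sum_distrib_right mult.commute)
  finally show ?thesis .
qed

lemma mv_bound2:
  fixes A :: "complex^'m^'n"
  assumes p: "p \<ge> 1" and q: "q \<ge> 1"
  shows "lpnorm q (A *v x) \<le> (real CARD('m) * maxcol1 A) * lpnorm p x"
proof -
  have "lpnorm q (A *v x) \<le> lpnorm (ereal 1) (A *v x)" using q by (intro lp_mono) (auto simp: one_ereal_def)
  also have "\<dots> \<le> (\<Sum>j\<in>UNIV. norm (x$j) * colnorm1 A j)" by (rule mv_bound)
  also have "\<dots> \<le> (\<Sum>j\<in>(UNIV::'m set). lpnorm p x * maxcol1 A)"
    using lp_ge_comp[OF p, of x] col_le_max colnorm_nonneg lp_nonneg[OF p, of x] by (intro sum_mono mult_mono) auto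
  also have "\<dots> = (real CARD('m) * maxcol1 A) * lpnorm p x" by simp
  finally show ?thesis .
qed

lemma op_bdd:
  fixes A :: "complex^'m^'n"
  assumes p: "p \<ge> 1" and q: "q \<ge> 1"
  shows "bdd_above ((\<lambda>x. lpnorm q (A *v x) / lpnorm p x) ` SF F)"
proof (rule bdd_aboveI2)
  fix x :: "complex^'m" assume "x \<in> SF F"
  hence xp: "lpnorm p x > 0" using lp_pos[OF p, of x] by (simp add: SF_def)
  show "lpnorm q (A *v x) / lpnorm p x \<le> real CARD('m) * maxcol1 A"
    using mv_bound2[OF p q, of A x] xp by (simp add: pos_divide_le_eq)
qed

lemma op_ge:
  fixes A :: "complex^'m^'n"
  assumes p: "p \<ge> 1" and q: "q \<ge> 1" and x: "x \<in> SF F"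
  shows "lpnorm q (A *v x) \<le> opnorm F p q A * lpnorm p x"
proof -
  have xp: "lpnorm p x > 0" using lp_pos[OF p, of x] x by (simp add: SF_def)
  have "lpnorm q (A *v x) / lpnorm p x \<le> opnorm F p q A"
    unfolding opnorm_SF by (rule cSUP_upper[OF x op_bdd[OF p q]])
  thus ?thesis using xp by (simp add: pos_divide_le_eq)
qed

lemma ev_SF: assumes "0 \<in> F" "1 \<in> F" shows "ev j \<in> SF F"
proof -
  have "ev j $ j = 1" by (simp add: ev_def)
  hence "ev j \<noteq> 0" by auto
  thus ?thesis using assms by (simp add: SF_def ev_def)
qed

lemma op_le:
  fixes A :: "complex^'m^'n"
  assumes F: "0 \<in> F" "1 \<in> F" and p: "p \<ge> 1"
    and K: "\<And>x. x \<in> SF F \<Longrightarrow> lpnorm q (A *v x) \<le> K * lpnorm p x"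
  shows "opnorm F p q A \<le> K"
  unfolding opnorm_SF
proof (rule cSUP_least)
  show "(SF F :: (complex^'m) set) \<noteq> {}" using ev_SF[OF F] by blast
  fix x :: "complex^'m" assume x: "x \<in> SF F"
  have xp: "lpnorm p x > 0" using lp_pos[OF p, of x] x by (simp add: SF_def)
  show "lpnorm q (A *v x) / lpnorm p x \<le> K" using K[OF x] xp by (simp add: pos_divide_le_eq)
qed

lemma mv_ev: "A *v ev j = (\<chi> i. A$i$j)"
  by (simp add: vec_eq_iff matrix_vector_mult_def ev_def if_distrib cong: if_cong)

lemma op_col:
  fixes A :: "complex^'m^'n"
  assumes F: "0 \<in> F" "1 \<in> F" and p: "p \<ge> 1" and q: "q \<ge> 1"
  shows "lpnorm q (\<chi> i. A$i$j) \<le> opnorm F p q A"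
proof -
  have "lpnorm q (A *v ev j) \<le> opnorm F p q A * lpnorm p (ev j)" by (rule op_ge[OF p q ev_SF[OF F]])
  moreover have "lpnorm p (ev j) = 1" unfolding ev_def by (rule lp_unit[OF p])
  ultimately show ?thesis by (simp add: mv_ev)
qed

lemma op_nonneg:
  fixes A :: "complex^'m^'n"
  assumes F: "0 \<in> F" "1 \<in> F" and p: "p \<ge> 1" and q: "q \<ge> 1"
  shows "0 \<le> opnorm F p q A"
  using op_col[OF F p q, of A undefined] lp_nonneg[OF q, of "\<chi> i. A$i$undefined"] by linarith

lemma op11:
  fixes A :: "complex^'m^'n"
  assumes F: "0 \<in> F" "1 \<in> F"
  shows "opnorm F (ereal 1) (ereal 1) A = maxcol1 A"
proof (rule antisym)
  show "opnorm F (ereal 1) (ereal 1) A \<le> maxcol1 A"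
  proof (rule op_le[OF F])
    fix x :: "complex^'m"
    have "lpnorm (ereal 1) (A *v x) \<le> (\<Sum>j\<in>UNIV. norm (x$j) * colnorm1 A j)" by (rule mv_bound)
    also have "\<dots> \<le> (\<Sum>j\<in>UNIV. norm (x$j) * maxcol1 A)"
      using col_le_max by (intro sum_mono mult_left_mono) auto
    also have "\<dots> = maxcol1 A * lpnorm (ereal 1) x" by (simp add: lp_one sum_distrib_left mult.commute)
    finally show "lpnorm (ereal 1) (A *v x) \<le> maxcol1 A * lpnorm (ereal 1) x" .
  qed simp
  obtain j where j: "colnorm1 A j = maxcol1 A" using maxcol_attained by blast
  have "lpnorm (ereal 1) (\<chi> i. A$i$j) = colnorm1 A j" by (simp add: lp_one colnorm1_def)
  thus "maxcol1 A \<le> opnorm F (ereal 1) (ereal 1) A" using op_col[OF F, of "ereal 1" "ereal 1" A j] j by simp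
qed


lemma e1: "1 \<le> r \<Longrightarrow> (1::ereal) \<le> ereal r" by (simp add: one_ereal_def)

lemma cnj_Reals: "z \<in> \<real> \<Longrightarrow> cnj z \<in> \<real>" by (auto elim!: Reals_cases)

lemma ex_real_between:
  assumes "ereal a < p" shows "\<exists>r. a < r \<and> ereal r < p"
proof -
  obtain z where z: "ereal a < z" "z < p" using dense[OF assms] by blast
  then show ?thesis by (cases z) auto
qed

lemma ex_s:
  assumes "(1::ereal) < q" shows "\<exists>s. 1 < s \<and> s \<le> 2 \<and> ereal s < q"
proof -
  have "ereal 1 < min q 2" using assms by (simp add: one_ereal_def)
  then obtain s where "1 < s" "ereal s < min q 2" using ex_real_between by blast
  thus ?thesis by (intro exI[of _ s]) auto
qed

lemma small_contra:
  fixes \<alpha> a C \<delta> :: real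
  assumes "0 < \<alpha>" "0 < a" "0 \<le> C" "0 < \<delta>"
    and H: "\<And>t. 0 < t \<Longrightarrow> t < \<delta> \<Longrightarrow> a \<le> C * t powr \<alpha>"
  shows False
proof -
  define b where "b = a / (2 * (C + 1))"
  have bp: "b > 0" unfolding b_def using assms by simp
  define t where "t = min (\<delta>/2) (b powr (1/\<alpha>))"
  have tp: "t > 0" unfolding t_def using bp assms by simp
  have td: "t < \<delta>" unfolding t_def using assms by simp
  have "t powr \<alpha> \<le> (b powr (1/\<alpha>)) powr \<alpha>" using tp assms unfolding t_def by (intro powr_mono2) auto
  also have "\<dots> = b" using assms bp by (simp add: powr_powr)
  finally have tb: "t powr \<alpha> \<le> b" .
  have "C * t powr \<alpha> \<le> C * b" using tb assms by (simp add: mult_left_mono)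
  also have "C * b < a"
  proof -
    have "0 \<le> C * a" using assms by simp
    hence h: "0 < C * a + a * 2" using assms by linarith
    thus ?thesis unfolding b_def using assms h by (simp add: field_simps)
  qed
  finally show False using H[OF tp td] by simp
qed

lemma part2:
  fixes A :: "complex^'m^'n"
  assumes F: "0 \<in> F" "1 \<in> F" and p: "p \<ge> 1" and q: "q \<ge> 1"
    and j: "\<And>i. norm (A$i$j) = real CARD('n) powr (- inv_exp q) * opnorm F p q A"
  shows "E11 F p q A"
  unfolding E11_def
proof (intro allI impI)
  fix r s :: real
  assume rs: "1 \<le> r \<and> ereal r < p \<and> 1 \<le> s \<and> ereal s < q"
  define P where "P = opnorm F p q A"
  define n where "n = real CARD('n)"
  have np: "n > 0" unfolding n_def by simp
  have P0: "P \<ge> 0" unfolding P_def by (rule op_nonneg[OF F p q])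
  define c where "c = n powr (- inv_exp q) * P"
  have c0: "c \<ge> 0" unfolding c_def using P0 by simp
  have r1: "(1::ereal) \<le> ereal r" and s1: "(1::ereal) \<le> ereal s" using rs e1 by auto
  have col: "lpnorm (ereal s) (\<chi> i. A$i$j) = n powr (1/s) * c"
    using lp_const[OF s1, of "\<chi> i. A$i$j" c] j c0 rs unfolding c_def P_def n_def
    by (simp add: inv_exp_def)
  have nc: "n powr (1/s) * c = n powr (1/s - inv_exp q) * P"
    unfolding c_def by (simp add: powr_diff powr_minus field_simps)
  show "opnorm F (ereal r) (ereal s) A = real CARD('n) powr (1/s - inv_exp q) * opnorm F p q A"
  proof (rule antisym)
    show "opnorm F (ereal r) (ereal s) A \<le> real CARD('n) powr (1/s - inv_exp q) * opnorm F p q A"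
    proof (rule op_le[OF F r1])
      fix x :: "complex^'m" assume x: "x \<in> SF F"
      have "lpnorm (ereal s) (A *v x) \<le> n powr (1/s - inv_exp q) * lpnorm q (A *v x)"
        unfolding n_def using rs by (intro lp_pm) auto
      also have "\<dots> \<le> n powr (1/s - inv_exp q) * (P * lpnorm p x)"
        unfolding P_def using op_ge[OF p q x, of A] by (intro mult_left_mono) auto
      also have "\<dots> \<le> n powr (1/s - inv_exp q) * (P * lpnorm (ereal r) x)"
        using lp_mono[of r p x] rs P0 by (intro mult_left_mono) auto
      finally show "lpnorm (ereal s) (A *v x) \<le> real CARD('n) powr (1/s - inv_exp q) * opnorm F p q A * lpnorm (ereal r) x"
        unfolding n_def P_def by (simp add: mult.assoc)
    qed
    show "real CARD('n) powr (1/s - inv_exp q) * opnorm F p q A \<le> opnorm F (ereal r) (ereal s) A"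
      using op_col[OF F r1 s1, of A j] col nc unfolding n_def P_def by simp
  qed
qed


lemma part_iii:
  fixes A :: "complex^'m^'n"
  assumes F: "0 \<in> F" "1 \<in> F" and p: "p > 1" and q: "q > 1" and E: "E11 F p q A"
  shows "maxcol1 A = real CARD('n) powr (1 - inv_exp q) * opnorm F p q A"
proof -
  have "opnorm F (ereal 1) (ereal 1) A = real CARD('n) powr (1/1 - inv_exp q) * opnorm F p q A"
    using E p q unfolding E11_def by (simp add: one_ereal_def)
  thus ?thesis using op11[OF F, of A] by simp
qed

lemma part_i:
  fixes A :: "complex^'m^'n"
  assumes F: "0 \<in> F" "1 \<in> F" and p: "p > 1" and q: "q > 1" and E: "E11 F p q A"
    and j: "colnorm1 A j = maxcol1 A"
  shows "norm (A$i$j) = maxcol1 A / real CARD('n)"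
proof -
  define n where "n = real CARD('n)"
  define \<sigma> where "\<sigma> = maxcol1 A"
  define P where "P = opnorm F p q A"
  have np: "n \<ge> 1" unfolding n_def by simp
  have iii: "\<sigma> = n powr (1 - inv_exp q) * P" using part_iii[OF F p q E] unfolding n_def \<sigma>_def P_def .
  have v_le: "norm (A$l$j) \<le> \<sigma>" for l
    using j unfolding \<sigma>_def colnorm1_def by (metis member_le_sum norm_ge_zero UNIV_I finite)
  show ?thesis
  proof (cases "\<sigma> = 0")
    case True
    have "norm (A$i$j) = 0" using v_le[of i] True by simp
    thus ?thesis using True unfolding \<sigma>_def by simp
  next
    case False
    have \<sigma>p: "\<sigma> > 0" using False colnorm_nonneg[of A j] j unfolding \<sigma>_def by simp
    define K where "K = \<sigma> / n"
    have Kp: "K > 0" unfolding K_def using \<sigma>p np by simp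
    have K\<sigma>: "K \<le> \<sigma>" unfolding K_def using \<sigma>p np by (simp add: divide_le_eq)
    obtain s where s: "1 < s" "s \<le> 2" "ereal s < q" using ex_s[OF q] by blast
    have "opnorm F (ereal 1) (ereal s) A = n powr (1/s - inv_exp q) * P"
      using E p s unfolding E11_def n_def P_def by (simp add: one_ereal_def)
    also have "n powr (1/s - inv_exp q) * P = n powr (1/s) * K"
    proof -
      have "n powr (1/s - inv_exp q) = n powr (1/s) / n * n powr (1 - inv_exp q)"
        using np by (simp add: powr_diff)
      thus ?thesis unfolding K_def iii by simp
    qed
    finally have opn: "opnorm F (ereal 1) (ereal s) A = n powr (1/s) * K" .
    have s1: "(1::ereal) \<le> ereal s" using s e1 by auto
    have "lpnorm (ereal s) (\<chi> l. A$l$j) \<le> n powr (1/s) * K"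
      using op_col[OF F _ s1, of "ereal 1" A j] opn by simp
    hence "lpnorm (ereal s) (\<chi> l. A$l$j) powr s \<le> (n powr (1/s) * K) powr s"
      using lp_nonneg[OF s1, of "\<chi> l. A$l$j"] s by (intro powr_mono2) auto
    also have "\<dots> = n * K powr s" using np Kp s by (simp add: powr_mult powr_powr)
    finally have sumle: "(\<Sum>l\<in>UNIV. norm (A$l$j) powr s) \<le> n * K powr s"
      using lp_pow[of s "\<chi> l. A$l$j"] s by simp
    define \<kappa> where "\<kappa> = (s-1) * \<sigma> powr (s-2) / 2"
    have \<kappa>p: "\<kappa> > 0" unfolding \<kappa>_def using s \<sigma>p by simp
    have sc: "K powr s + s * K powr (s-1) * (norm (A$l$j) - K) + \<kappa> * (norm (A$l$j) - K)^2 \<le> norm (A$l$j) powr s" for l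
      unfolding \<kappa>_def using strong_conv[OF s(1) s(2) Kp K\<sigma>, of "norm (A$l$j)"] v_le[of l] by simp
    have "(\<Sum>l\<in>UNIV. K powr s + s * K powr (s-1) * (norm (A$l$j) - K) + \<kappa> * (norm (A$l$j) - K)^2)
       \<le> (\<Sum>l\<in>UNIV. norm (A$l$j) powr s)" using sc by (intro sum_mono) auto
    also have "(\<Sum>l\<in>UNIV. K powr s + s * K powr (s-1) * (norm (A$l$j) - K) + \<kappa> * (norm (A$l$j) - K)^2)
       = n * K powr s + s * K powr (s-1) * ((\<Sum>l\<in>UNIV. norm (A$l$j)) - n * K) + \<kappa> * (\<Sum>l\<in>UNIV. (norm (A$l$j) - K)^2)"
    proof -
      have e1': "(\<Sum>l\<in>UNIV. s * K powr (s-1) * (norm (A$l$j) - K)) = s * K powr (s-1) * ((\<Sum>l\<in>UNIV. norm (A$l$j)) - n * K)"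
        by (simp add: sum_distrib_left[symmetric] sum_subtractf n_def)
      have e2': "(\<Sum>l\<in>UNIV. \<kappa> * (norm (A$l$j) - K)^2) = \<kappa> * (\<Sum>l\<in>UNIV. (norm (A$l$j) - K)^2)"
        by (simp add: sum_distrib_left)
      have e3': "(\<Sum>l\<in>(UNIV::'n set). K powr s) = n * K powr s" by (simp add: n_def)
      show ?thesis by (simp only: sum.distrib e1' e2' e3')
    qed
    also have "(\<Sum>l\<in>UNIV. norm (A$l$j)) - n * K = 0"
      using j np unfolding colnorm1_def K_def \<sigma>_def by simp
    finally have "\<kappa> * (\<Sum>l\<in>UNIV. (norm (A$l$j) - K)^2) \<le> 0" using sumle by simp
    hence "(\<Sum>l\<in>UNIV. (norm (A$l$j) - K)^2) \<le> 0" using \<kappa>p by (simp add: mult_le_0_iff)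
    hence "(\<Sum>l\<in>UNIV. (norm (A$l$j) - K)^2) = 0" by (simp add: antisym sum_nonneg)
    hence "(norm (A$i$j) - K)^2 = 0" by (simp add: sum_nonneg_eq_0_iff)
    thus ?thesis unfolding K_def \<sigma>_def n_def by simp
  qed
qed


definition xt :: "'m::finite \<Rightarrow> 'm \<Rightarrow> complex \<Rightarrow> complex^'m" where
  "xt j k \<tau> = (\<chi> l. if l = j then 1 else if l = k then \<tau> else 0)"

lemma mv_xt:
  fixes A :: "complex^'m^'n"
  assumes "j \<noteq> k"
  shows "(A *v xt j k \<tau>)$i = A$i$j + \<tau> * A$i$k"
proof -
  have "(A *v xt j k \<tau>)$i = (\<Sum>l\<in>UNIV. (if l = j then A$i$j else 0) + (if l = k then \<tau> * A$i$k else 0))"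
    unfolding matrix_vector_mult_def xt_def using assms by (auto intro!: sum.cong)
  also have "\<dots> = A$i$j + \<tau> * A$i$k" by (simp add: sum.distrib)
  finally show ?thesis .
qed

lemma xt_SF:
  assumes "j \<noteq> k" "0 \<in> F" "1 \<in> F" "\<tau> \<in> F"
  shows "xt j k \<tau> \<in> SF F"
proof -
  have "xt j k \<tau> $ j = 1" by (simp add: xt_def)
  hence "xt j k \<tau> \<noteq> 0" by auto
  thus ?thesis using assms by (simp add: SF_def xt_def)
qed

lemma lp_xt:
  assumes "r \<ge> 1" "j \<noteq> k"
  shows "lpnorm (ereal r) (xt j k \<tau>) = (1 + norm \<tau> powr r) powr (1/r)"
  unfolding xt_def by (rule lp_two[OF assms])

lemma powr_le_self: "(x::real) \<ge> 1 \<Longrightarrow> a \<le> 1 \<Longrightarrow> x powr a \<le> x"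
  using powr_mono[of a 1 x] by simp

lemma re_term:
  assumes "norm a = K" "K > 0"
  shows "Re (w * cnj a) / K \<le> norm w"
proof -
  have "Re (w * cnj a) \<le> norm (w * cnj a)" by (rule complex_Re_le_cmod)
  also have "\<dots> = norm w * K" using assms by (simp add: norm_mult)
  finally show ?thesis using assms by (simp add: divide_le_eq)
qed

lemma F_facts:
  fixes A :: "complex^'m^'n"
  assumes FR: "F = \<real> \<or> F = UNIV" and A_F: "\<forall>i j. A$i$j \<in> F"
  shows "0 \<in> F" "1 \<in> F" "\<And>t u. u \<in> F \<Longrightarrow> complex_of_real t * u \<in> F"
    "\<And>i j k. cnj (A$i$k * cnj (A$i$j)) \<in> F"
    "\<And>j k. cnj (\<Sum>i\<in>UNIV. A$i$k * cnj (A$i$j)) \<in> F"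
  using FR A_F by (auto intro!: Reals_mult cnj_Reals sum_in_Reals)

lemma part_ii:
  fixes A :: "complex^'m^'n"
  assumes FR: "F = \<real> \<or> F = UNIV" and A_F: "\<forall>i j. A$i$j \<in> F"
    and p: "p > 1" and q: "q > 1" and E: "E11 F p q A"
    and j: "colnorm1 A j = maxcol1 A" and jk: "k \<noteq> j"
  shows "(\<Sum>i\<in>UNIV. A$i$k * cnj (A$i$j)) = 0"
proof -
  note F = F_facts[OF FR A_F]
  define n where "n = real CARD('n)"
  define \<sigma> where "\<sigma> = maxcol1 A"
  define P where "P = opnorm F p q A"
  have np: "n \<ge> 1" unfolding n_def by simp
  have iii: "\<sigma> = n powr (1 - inv_exp q) * P" using part_iii[OF F(1,2) p q E] unfolding n_def \<sigma>_def P_def .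
  have aK: "norm (A$i$j) = \<sigma> / n" for i using part_i[OF F(1,2) p q E j] unfolding \<sigma>_def n_def .
  show ?thesis
  proof (cases "\<sigma> = 0")
    case True
    hence "A$i$j = 0" for i using aK[of i] by simp
    thus ?thesis by simp
  next
    case False
    have \<sigma>p: "\<sigma> > 0" using False colnorm_nonneg[of A j] j unfolding \<sigma>_def by simp
    define K where "K = \<sigma> / n"
    have Kp: "K > 0" unfolding K_def using \<sigma>p np by simp
    have aK': "norm (A$i$j) = K" for i using aK unfolding K_def .
    define z where "z = (\<Sum>i\<in>UNIV. A$i$k * cnj (A$i$j))"
    show ?thesis
    proof (rule ccontr)
      assume "(\<Sum>i\<in>UNIV. A$i$k * cnj (A$i$j)) \<noteq> 0"
      hence zn: "z \<noteq> 0" unfolding z_def .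
      define u where "u = cnj z"
      have uF: "u \<in> F" unfolding u_def z_def by (rule F(5))
      have ereal1p: "ereal 1 < p" using p by (simp add: one_ereal_def)
      obtain r where r: "1 < r" "ereal r < p" using ex_real_between[OF ereal1p] by blast
      have r1: "(1::ereal) \<le> ereal r" using r e1 by auto
      have "opnorm F (ereal r) (ereal 1) A = n powr (1/1 - inv_exp q) * P"
        using E r q unfolding E11_def n_def P_def by (simp add: one_ereal_def)
      hence opn: "opnorm F (ereal r) (ereal 1) A = \<sigma>" using iii by simp
      have key: "norm z ^ 2 / K \<le> (\<sigma> * norm u powr r) * t powr (r - 1)" if t: "0 < t" "t < 1" for t
      proof -
        define \<tau> where "\<tau> = complex_of_real t * u"
        have \<tau>F: "\<tau> \<in> F" unfolding \<tau>_def using F(3) uF by blast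
        have xS: "xt j k \<tau> \<in> SF F" using xt_SF[OF jk[symmetric] F(1,2) \<tau>F] .
        have up: "lpnorm (ereal 1) (A *v xt j k \<tau>) \<le> \<sigma> * lpnorm (ereal r) (xt j k \<tau>)"
          using op_ge[OF r1 _ xS, of "ereal 1" A] opn by simp
        have "lpnorm (ereal r) (xt j k \<tau>) = (1 + norm \<tau> powr r) powr (1/r)"
          using lp_xt[of r j k \<tau>] r jk by simp
        also have "\<dots> \<le> 1 + norm \<tau> powr r" using r by (intro powr_le_self) auto
        also have "norm \<tau> powr r = t powr r * norm u powr r" unfolding \<tau>_def using t
          by (simp add: norm_mult powr_mult)
        finally have lx: "lpnorm (ereal r) (xt j k \<tau>) \<le> 1 + t powr r * norm u powr r" .
        have "\<sigma> * lpnorm (ereal r) (xt j k \<tau>) \<le> \<sigma> * (1 + t powr r * norm u powr r)"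
          using lx \<sigma>p by (intro mult_left_mono) auto
        also have "\<dots> = \<sigma> + \<sigma> * norm u powr r * t powr r" by (simp add: algebra_simps)
        finally have up2: "lpnorm (ereal 1) (A *v xt j k \<tau>) \<le> \<sigma> + \<sigma> * norm u powr r * t powr r"
          using up by linarith
        have "Re (\<Sum>i\<in>UNIV. (A *v xt j k \<tau>)$i * cnj (A$i$j)) / K \<le> (\<Sum>i\<in>UNIV. norm ((A *v xt j k \<tau>)$i))"
          unfolding Re_sum sum_divide_distrib using re_term[OF aK' Kp] by (intro sum_mono) auto
        also have "\<dots> = lpnorm (ereal 1) (A *v xt j k \<tau>)" by (simp add: lp_one)
        also have "(\<Sum>i\<in>UNIV. (A *v xt j k \<tau>)$i * cnj (A$i$j)) = (\<Sum>i\<in>UNIV. A$i$j * cnj (A$i$j)) + \<tau> * z"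
          unfolding z_def mv_xt[OF jk[symmetric]] by (simp add: algebra_simps sum.distrib sum_distrib_left)
        also have "(\<Sum>i\<in>UNIV. A$i$j * cnj (A$i$j)) = complex_of_real (n * K^2)"
          unfolding n_def using aK' by (simp add: complex_norm_square[symmetric])
        also have "Re (complex_of_real (n * K^2) + \<tau> * z) = n * K^2 + t * norm z ^ 2"
          unfolding \<tau>_def u_def
        proof -
          have "(cmod z)^2 = (Re z)^2 + (Im z)^2" by (rule cmod_power2)
          thus "Re (complex_of_real (n * K^2) + complex_of_real t * cnj z * z) = n * K^2 + t * (cmod z)^2"
            by (simp add: algebra_simps power2_eq_square)
        qed
        finally have low: "(n * K^2 + t * norm z ^ 2) / K \<le> \<sigma> + \<sigma> * norm u powr r * t powr r" using up2 by linarith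
        have "(n * K^2 + t * norm z ^ 2) / K = \<sigma> + t * (norm z ^ 2 / K)"
          unfolding K_def using np \<sigma>p by (simp add: field_simps power2_eq_square)
        hence "t * (norm z ^ 2 / K) \<le> t * ((\<sigma> * norm u powr r) * t powr (r - 1))"
          using low t by (simp add: powr_diff field_simps)
        thus ?thesis using t mult_le_cancel_left_pos[of t "norm z ^ 2 / K" "(\<sigma> * norm u powr r) * t powr (r - 1)"] by blast
      qed
      show False
        by (rule small_contra[of "r - 1" "norm z ^ 2 / K" "\<sigma> * norm u powr r" 1])
           (use r zn Kp \<sigma>p key in auto)
    qed
  qed
qed


lemma part3_fwd:
  fixes A :: "complex^'m^'n"
  assumes FR: "F = \<real> \<or> F = UNIV" and A_F: "\<forall>i j. A$i$j \<in> F"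
    and p: "p > 2" and q: "q > 1" and A0: "A \<noteq> 0" and E: "E11 F p q A"
  shows "\<exists>j. (\<forall>k. k \<noteq> j \<longrightarrow> (\<forall>i. A$i$k = 0)) \<and> (\<exists>c. \<forall>i. norm (A$i$j) = c)"
proof -
  note F = F_facts[OF FR A_F]
  have p1: "p > 1" 
  proof -
    have "(1::ereal) < 2" by simp
    thus ?thesis using p by (rule order.strict_trans)
  qed
  define n where "n = real CARD('n)"
  define \<sigma> where "\<sigma> = maxcol1 A"
  define P where "P = opnorm F p q A"
  have np: "n \<ge> 1" unfolding n_def by simp
  have iii: "\<sigma> = n powr (1 - inv_exp q) * P" using part_iii[OF F(1,2) p1 q E] unfolding n_def \<sigma>_def P_def .
  obtain j where j: "colnorm1 A j = maxcol1 A" using maxcol_attained by blast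
  obtain i1 k1 where ik1: "A$i1$k1 \<noteq> 0" using A0 by (metis vec_eq_iff zero_index)
  have "0 < norm (A$i1$k1)" using ik1 by simp
  also have "norm (A$i1$k1) \<le> colnorm1 A k1" unfolding colnorm1_def
    by (rule member_le_sum) auto
  also have "\<dots> \<le> \<sigma>" unfolding \<sigma>_def by (rule col_le_max)
  finally have \<sigma>p: "\<sigma> > 0" .
  define K where "K = \<sigma> / n"
  have Kp: "K > 0" unfolding K_def using \<sigma>p np by simp
  have aK: "norm (A$i$j) = K" for i using part_i[OF F(1,2) p1 q E j] unfolding K_def \<sigma>_def n_def .
  have zero: "A$i0$k = 0" if jk: "k \<noteq> j" for k i0
  proof (rule ccontr)
    assume nz: "A$i0$k \<noteq> 0"
    define b where "b i = A$i$k * cnj (A$i$j)" for i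
    have sb: "(\<Sum>i\<in>UNIV. b i) = 0" unfolding b_def by (rule part_ii[OF FR A_F p1 q E j jk])
    define u where "u = cnj (b i0)"
    have uF: "u \<in> F" unfolding u_def b_def by (rule F(4))
    define \<beta> where "\<beta> i = Re (u * b i)" for i
    have s\<beta>: "(\<Sum>i\<in>UNIV. \<beta> i) = 0"
    proof -
      have "(\<Sum>i\<in>UNIV. \<beta> i) = Re (u * (\<Sum>i\<in>UNIV. b i))" unfolding \<beta>_def by (simp add: Re_sum sum_distrib_left)
      thus ?thesis using sb by simp
    qed
    have b0: "b i0 \<noteq> 0" unfolding b_def using nz aK[of i0] Kp by auto
    have \<beta>0: "\<beta> i0 = (norm (b i0))^2"
    proof -
      have "(cmod (b i0))^2 = (Re (b i0))^2 + (Im (b i0))^2" by (rule cmod_power2)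
      thus ?thesis unfolding \<beta>_def u_def by (simp add: power2_eq_square)
    qed
    have \<beta>0p: "\<beta> i0 > 0" using \<beta>0 b0 by simp
    have ereal2p: "ereal 2 < p" using p by simp
    obtain r where r: "2 < r" "ereal r < p" using ex_real_between[OF ereal2p] by blast
    obtain s where s: "1 < s" "s \<le> 2" "ereal s < q" using ex_s[OF q] by blast
    have r1: "(1::ereal) \<le> ereal r" and s1: "(1::ereal) \<le> ereal s" using r s e1 by auto
    have "opnorm F (ereal r) (ereal s) A = n powr (1/s - inv_exp q) * P"
      using E r s unfolding E11_def n_def P_def by simp
    also have "n powr (1/s - inv_exp q) * P = n powr (1/s) * K"
    proof -
      have "n powr (1/s - inv_exp q) = n powr (1/s) / n * n powr (1 - inv_exp q)"
        using np by (simp add: powr_diff)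
      thus ?thesis unfolding K_def iii by simp
    qed
    finally have opn: "opnorm F (ereal r) (ereal s) A = n powr (1/s) * K" .
    define B where "B = (\<Sum>i\<in>UNIV. \<bar>\<beta> i\<bar>)"
    have B0: "B \<ge> 0" unfolding B_def by (simp add: sum_nonneg)
    have \<beta>B: "\<bar>\<beta> i\<bar> \<le> B" for i unfolding B_def by (rule member_le_sum) auto
    define \<delta> where "\<delta> = min 1 (K^2 / (B + 1))"
    have \<delta>p: "\<delta> > 0" unfolding \<delta>_def using Kp B0 by simp
    define \<kappa> where "\<kappa> = (s-1) * (2*K) powr (s-2) / 2"
    have \<kappa>p: "\<kappa> > 0" unfolding \<kappa>_def using s Kp by simp
    have key: "\<kappa> * (\<beta> i0 / K)^2 \<le> (n * K powr s * norm u powr r) * t powr (r - 2)"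
      if t: "0 < t" "t < \<delta>" for t
    proof -
      define \<tau> where "\<tau> = complex_of_real t * u"
      have \<tau>F: "\<tau> \<in> F" unfolding \<tau>_def using F(3) uF by blast
      have xS: "xt j k \<tau> \<in> SF F" using xt_SF[OF jk[symmetric] F(1,2) \<tau>F] .
      define w where "w i = (A *v xt j k \<tau>)$i" for i
      define d where "d i = t * (\<beta> i / K)" for i
      have nt: "norm \<tau> powr r = norm u powr r * t powr r" unfolding \<tau>_def using t
        by (simp add: norm_mult powr_mult)
      have "lpnorm (ereal s) (A *v xt j k \<tau>) \<le> n powr (1/s) * K * lpnorm (ereal r) (xt j k \<tau>)"
        using op_ge[OF r1 s1 xS, of A] opn by simp
      also have "lpnorm (ereal r) (xt j k \<tau>) = (1 + norm \<tau> powr r) powr (1/r)"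
        using lp_xt[of r j k \<tau>] r jk by simp
      finally have up1: "lpnorm (ereal s) (A *v xt j k \<tau>) \<le> n powr (1/s) * K * (1 + norm \<tau> powr r) powr (1/r)" .
      have "(\<Sum>i\<in>UNIV. norm (w i) powr s) = lpnorm (ereal s) (A *v xt j k \<tau>) powr s"
        unfolding w_def using lp_pow[of s "A *v xt j k \<tau>"] s by simp
      also have "\<dots> \<le> (n powr (1/s) * K * (1 + norm \<tau> powr r) powr (1/r)) powr s"
        using up1 lp_nonneg[OF s1, of "A *v xt j k \<tau>"] s by (intro powr_mono2) auto
      also have "\<dots> = n * K powr s * (1 + norm \<tau> powr r) powr (s/r)"
        using np Kp s by (simp add: powr_mult powr_powr)
      also have "\<dots> \<le> n * K powr s * (1 + norm \<tau> powr r)"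
        using r s np Kp by (intro mult_left_mono powr_le_self) auto
      finally have up: "(\<Sum>i\<in>UNIV. norm (w i) powr s) \<le> n * K powr s + n * K powr s * norm u powr r * t powr r"
        using nt by (simp add: algebra_simps)
      have dK: "\<bar>d i\<bar> < K" for i
      proof -
        have "\<bar>t * \<beta> i\<bar> \<le> t * B" using \<beta>B[of i] t by (simp add: abs_mult mult_left_mono)
        also have "\<dots> \<le> t * (B + 1)" using t by simp
        also have "\<dots> < K^2 / (B + 1) * (B + 1)" using t B0 unfolding \<delta>_def by (intro mult_strict_right_mono) auto
        also have "\<dots> = K^2" using B0 by simp
        finally have "\<bar>t * \<beta> i\<bar> < K * K" by (simp add: power2_eq_square)
        thus ?thesis unfolding d_def using Kp by (simp add: abs_mult abs_divide pos_divide_less_eq mult.commute)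
      qed
      have vw: "K + d i \<le> norm (w i)" for i
      proof -
        have R: "Re (w i * cnj (A$i$j)) = K^2 + t * \<beta> i"
        proof -
          have "w i * cnj (A$i$j) = A$i$j * cnj (A$i$j) + complex_of_real t * (u * b i)"
            unfolding w_def mv_xt[OF jk[symmetric]] \<tau>_def b_def by (simp add: algebra_simps)
          also have "A$i$j * cnj (A$i$j) = complex_of_real (K^2)"
            using aK[of i] by (simp add: complex_norm_square[symmetric])
          finally show ?thesis unfolding \<beta>_def by simp
        qed
        have "Re (w i * cnj (A$i$j)) / K \<le> norm (w i)" by (rule re_term[OF aK[of i] Kp])
        hence "(K^2 + t * \<beta> i) / K \<le> norm (w i)" unfolding R .
        moreover have "(K^2 + t * \<beta> i) / K = K + d i" unfolding d_def using Kp
          by (simp add: field_simps power2_eq_square)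
        ultimately show ?thesis by simp
      qed
      have sc: "K powr s + s * K powr (s-1) * d i + \<kappa> * (d i)^2 \<le> norm (w i) powr s" for i
      proof -
        have "K powr s + s * K powr (s-1) * ((K + d i) - K) + \<kappa> * ((K + d i) - K)^2 \<le> (K + d i) powr s"
          unfolding \<kappa>_def using dK[of i] by (intro strong_conv[OF s(1) s(2) Kp]) auto
        also have "\<dots> \<le> norm (w i) powr s" using vw[of i] dK[of i] s by (intro powr_mono2) auto
        finally show ?thesis by simp
      qed
      have sd: "(\<Sum>i\<in>UNIV. d i) = 0" unfolding d_def using s\<beta>
        by (simp add: sum_distrib_left[symmetric] sum_divide_distrib[symmetric])
      have S1: "(\<Sum>i\<in>UNIV. K powr s + s * K powr (s-1) * d i + \<kappa> * (d i)^2) \<le> (\<Sum>i\<in>UNIV. norm (w i) powr s)"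
        by (intro sum_mono sc)
      have "(\<Sum>i\<in>UNIV. K powr s + s * K powr (s-1) * d i + \<kappa> * (d i)^2)
          = n * K powr s + s * K powr (s-1) * (\<Sum>i\<in>UNIV. d i) + \<kappa> * (\<Sum>i\<in>UNIV. (d i)^2)"
        unfolding n_def by (simp add: sum.distrib sum_distrib_left)
      also have "\<dots> = n * K powr s + \<kappa> * (\<Sum>i\<in>UNIV. (d i)^2)" using sd by simp
      finally have low0: "n * K powr s + \<kappa> * (\<Sum>i\<in>UNIV. (d i)^2) \<le> (\<Sum>i\<in>UNIV. norm (w i) powr s)"
        using S1 by linarith
      have "(d i0)^2 \<le> (\<Sum>i\<in>UNIV. (d i)^2)" by (rule member_le_sum) auto
      hence "\<kappa> * (d i0)^2 \<le> \<kappa> * (\<Sum>i\<in>UNIV. (d i)^2)" using \<kappa>p by simp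
      hence "\<kappa> * (d i0)^2 \<le> n * K powr s * norm u powr r * t powr r" using low0 up by linarith
      moreover have "\<kappa> * (d i0)^2 = t^2 * (\<kappa> * (\<beta> i0 / K)^2)" unfolding d_def by (simp add: power2_eq_square)
      moreover have "t powr r = t^2 * t powr (r - 2)" using t by (simp add: powr_diff powr_realpow)
      ultimately have "t^2 * (\<kappa> * (\<beta> i0 / K)^2) \<le> t^2 * ((n * K powr s * norm u powr r) * t powr (r - 2))"
        by (simp add: algebra_simps)
      moreover have "t^2 > 0" using t by simp
      ultimately show ?thesis
        using mult_le_cancel_left_pos[of "t^2" "\<kappa> * (\<beta> i0 / K)^2" "(n * K powr s * norm u powr r) * t powr (r - 2)"] by blast
    qed
    show False
      by (rule small_contra[of "r - 2" "\<kappa> * (\<beta> i0 / K)^2" "n * K powr s * norm u powr r" \<delta>])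
         (use r \<kappa>p \<beta>0p Kp np \<delta>p key in auto)
  qed
  show ?thesis using zero aK by blast
qed


lemma part3_bwd:
  fixes A :: "complex^'m^'n"
  assumes F: "0 \<in> F" "1 \<in> F" and p: "p \<ge> 1" and q: "q \<ge> 1"
    and j: "\<forall>k. k \<noteq> j \<longrightarrow> (\<forall>i. A$i$k = 0)" and c: "\<forall>i. norm (A$i$j) = c"
  shows "E11 F p q A"
proof -
  define n where "n = real CARD('n)"
  have np: "n > 0" unfolding n_def by simp
  have c0: "c \<ge> 0" using c by (metis norm_ge_zero)
  have Av: "(A *v x)$i = A$i$j * x$j" for x i
  proof -
    have "(A *v x)$i = (\<Sum>l\<in>UNIV. A$i$l * x$l)" by (simp add: matrix_vector_mult_def)
    also have "\<dots> = (\<Sum>l\<in>UNIV. if l = j then A$i$j * x$j else 0)"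
      by (rule sum.cong) (use j in auto)
    finally have "(A *v x)$i = (\<Sum>l\<in>UNIV. if l = j then A$i$j * x$j else 0)" .
    thus ?thesis by simp
  qed
  have P: "opnorm F p q A = n powr (inv_exp q) * c"
  proof (rule antisym)
    show "opnorm F p q A \<le> n powr (inv_exp q) * c"
    proof (rule op_le[OF F p])
      fix x :: "complex^'m"
      have "lpnorm q (A *v x) = n powr (inv_exp q) * (c * norm (x$j))"
        unfolding n_def using c c0 by (intro lp_const[OF q]) (auto simp: Av norm_mult)
      also have "\<dots> \<le> n powr (inv_exp q) * (c * lpnorm p x)"
        using lp_ge_comp[OF p, of x j] c0 by (intro mult_left_mono) auto
      finally show "lpnorm q (A *v x) \<le> n powr (inv_exp q) * c * lpnorm p x" by (simp add: mult.assoc)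
    qed
    have "lpnorm q (\<chi> i. A$i$j) = n powr (inv_exp q) * c"
      unfolding n_def using c c0 by (intro lp_const[OF q]) auto
    thus "n powr (inv_exp q) * c \<le> opnorm F p q A" using op_col[OF F p q, of A j] by simp
  qed
  show ?thesis
  proof (rule part2[OF F p q])
    fix i
    have "n powr (- inv_exp q) * (n powr (inv_exp q) * c) = c"
      using np by (simp add: powr_add[symmetric] mult.assoc[symmetric])
    thus "norm (A$i$j) = real CARD('n) powr (- inv_exp q) * opnorm F p q A"
      using c P unfolding n_def by simp
  qed
qed

theorem theorem4:
  fixes F :: "complex set" and A :: "complex^'m^'n" and p q :: ereal
  assumes F: "F = \<real> \<or> F = UNIV"
    and A_F: "\<forall>i j. A$i$j \<in> F"
    and p: "p > 1" and q: "q > 1"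
  shows
   "(E11 F p q A \<longrightarrow>
       (\<forall>j. colnorm1 A j = maxcol1 A \<longrightarrow>
            (\<forall>i. norm (A$i$j) = maxcol1 A / real CARD('n))) \<and>
       (\<forall>j. colnorm1 A j = maxcol1 A \<longrightarrow>
            (\<forall>k. k \<noteq> j \<longrightarrow> (\<Sum>i\<in>UNIV. A$i$k * cnj (A$i$j)) = 0)) \<and>
       maxcol1 A = real CARD('n) powr (1 - inv_exp q) * opnorm F p q A)
    \<and> ((\<exists>j. \<forall>i. norm (A$i$j) = real CARD('n) powr (- inv_exp q) * opnorm F p q A)
         \<longrightarrow> E11 F p q A)
    \<and> (p > 2 \<and> A \<noteq> 0 \<longrightarrow>
         (E11 F p q A \<longleftrightarrow>
           (\<exists>j. (\<forall>k. k \<noteq> j \<longrightarrow> (\<forall>i. A$i$k = 0)) \<and>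
                (\<exists>c. \<forall>i. norm (A$i$j) = c))))"
proof -
  note FF = F_facts[OF F A_F]
  have p1: "p \<ge> 1" and q1: "q \<ge> 1" using p q by auto
  have C1: "E11 F p q A \<longrightarrow>
       (\<forall>j. colnorm1 A j = maxcol1 A \<longrightarrow>
            (\<forall>i. norm (A$i$j) = maxcol1 A / real CARD('n))) \<and>
       (\<forall>j. colnorm1 A j = maxcol1 A \<longrightarrow>
            (\<forall>k. k \<noteq> j \<longrightarrow> (\<Sum>i\<in>UNIV. A$i$k * cnj (A$i$j)) = 0)) \<and>
       maxcol1 A = real CARD('n) powr (1 - inv_exp q) * opnorm F p q A"
  proof
    assume E: "E11 F p q A"
    show "(\<forall>j. colnorm1 A j = maxcol1 A \<longrightarrow>
            (\<forall>i. norm (A$i$j) = maxcol1 A / real CARD('n))) \<and>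
       (\<forall>j. colnorm1 A j = maxcol1 A \<longrightarrow>
            (\<forall>k. k \<noteq> j \<longrightarrow> (\<Sum>i\<in>UNIV. A$i$k * cnj (A$i$j)) = 0)) \<and>
       maxcol1 A = real CARD('n) powr (1 - inv_exp q) * opnorm F p q A"
      using part_i[OF FF(1,2) p q E] part_ii[OF F A_F p q E] part_iii[OF FF(1,2) p q E] by auto
  qed
  have C2: "(\<exists>j. \<forall>i. norm (A$i$j) = real CARD('n) powr (- inv_exp q) * opnorm F p q A)
         \<longrightarrow> E11 F p q A"
  proof
    assume "\<exists>j. \<forall>i. norm (A$i$j) = real CARD('n) powr (- inv_exp q) * opnorm F p q A"
    then obtain j where j: "\<And>i. norm (A$i$j) = real CARD('n) powr (- inv_exp q) * opnorm F p q A" by blast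
    show "E11 F p q A" by (rule part2[OF FF(1,2) p1 q1 j])
  qed
  have C3: "p > 2 \<and> A \<noteq> 0 \<longrightarrow>
         (E11 F p q A \<longleftrightarrow>
           (\<exists>j. (\<forall>k. k \<noteq> j \<longrightarrow> (\<forall>i. A$i$k = 0)) \<and>
                (\<exists>c. \<forall>i. norm (A$i$j) = c)))"
  proof
    assume H: "p > 2 \<and> A \<noteq> 0"
    show "E11 F p q A \<longleftrightarrow>
           (\<exists>j. (\<forall>k. k \<noteq> j \<longrightarrow> (\<forall>i. A$i$k = 0)) \<and>
                (\<exists>c. \<forall>i. norm (A$i$j) = c))"
    proof
      assume E: "E11 F p q A"
      show "\<exists>j. (\<forall>k. k \<noteq> j \<longrightarrow> (\<forall>i. A$i$k = 0)) \<and> (\<exists>c. \<forall>i. norm (A$i$j) = c)"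
        using part3_fwd[OF F A_F _ q _ E] H by blast
    next
      assume "\<exists>j. (\<forall>k. k \<noteq> j \<longrightarrow> (\<forall>i. A$i$k = 0)) \<and> (\<exists>c. \<forall>i. norm (A$i$j) = c)"
      then obtain j c where j: "\<forall>k. k \<noteq> j \<longrightarrow> (\<forall>i. A$i$k = 0)" and c: "\<forall>i. norm (A$i$j) = c" by blast
      show "E11 F p q A" by (rule part3_bwd[OF FF(1,2) p1 q1 j c])
    qed
  qed
  show ?thesis by (rule conjI[OF C1 conjI[OF C2 C3]])
qed


end
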